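(* Let $T,\widehat T\in\mathbb R^{d\times k}$ with $T$ of full column rank. Let $q,p,\widehat q,\widehat p\in\mathbb R^d$ and let $\theta\in\mathbb R^k$ satisfy $T\theta=q-p$ and $\|\theta\|\le\theta_{\max}$. Let $\Delta_T,\Delta_p,\Delta_q\ge0$ satisfy $\|\widehat T-T\|\le\Delta_T$, $\|\widehat p-p\|\le\Delta_p$, $\|\widehat q-q\|\le\Delta_q$. If $\widehat\theta$ is any minimizer over $\theta'\in\mathbb R^k$ of $$\|\widehat T\theta'-\widehat q+\widehat p\|+\Delta_T\|\theta'\|,$$ then $$\|\widehat\theta-\theta\|\le 2\|T^\dagger\|\big(\Delta_q+\Delta_p+\theta_{\max}\Delta_T\big).$$
   Context: Vector norms are Euclidean norms and matrix norms are spectral (operator) norms. $T^\dagger$ denotes the Moore–Penrose pseudoinverse; for full-column-rank $T$, $\|T^\dagger\|$ is the inverse of the smallest singular value of $T$. *)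

theory Defs
  imports "HOL-Analysis.Analysis"
begin

text \<open>Spectral (operator) norm of a real matrix, induced by the Euclidean vector norm.
  (Note: the built-in norm on real^'n^'m is the Frobenius norm, so we use onorm.)\<close>
definition spec_norm :: "real^'n^'m \<Rightarrow> real" where
  "spec_norm A = onorm (\<lambda>x. A *v x)"

definition is_pinv :: "real^'n^'m \<Rightarrow> real^'m^'n \<Rightarrow> bool" where
  "is_pinv A X \<longleftrightarrow> A ** X ** A = A \<and> X ** A ** X = X \<and>
     transpose (A ** X) = A ** X \<and> transpose (X ** A) = X ** A"

definition pinv :: "real^'n^'m \<Rightarrow> real^'m^'n" where
  "pinv A = (THE X. is_pinv A X)"

end

theory Submission
  imports Defs
begin

lemma pinv_unique:
  fixes T :: "real^'k^'d" and X Y :: "real^'d^'k"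
  assumes X: "is_pinv T X" and Y: "is_pinv T Y"
  shows "X = Y"
proof -
  have x1: "T ** X ** T = T" and x2: "X ** T ** X = X" and x3: "transpose (T ** X) = T ** X"
    and x4: "transpose (X ** T) = X ** T" using X by (auto simp: is_pinv_def)
  have y1: "T ** Y ** T = T" and y2: "Y ** T ** Y = Y" and y3: "transpose (T ** Y) = T ** Y"
    and y4: "transpose (Y ** T) = Y ** T" using Y by (auto simp: is_pinv_def)
  have a: "T ** X = T ** Y"
  proof -
    have "T ** X = (T ** Y ** T) ** X" using y1 by simp
    also have "\<dots> = (T ** Y) ** (T ** X)" by (simp add: matrix_mul_assoc)
    also have "\<dots> = transpose (T ** Y) ** transpose (T ** X)" using x3 y3 by simp
    also have "\<dots> = transpose ((T ** X) ** (T ** Y))" by (simp add: matrix_transpose_mul)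
    also have "(T ** X) ** (T ** Y) = (T ** X ** T) ** Y" by (simp add: matrix_mul_assoc)
    also have "\<dots> = T ** Y" using x1 by simp
    finally show ?thesis using y3 by simp
  qed
  have b: "X ** T = Y ** T"
  proof -
    have "X ** T = X ** (T ** Y ** T)" using y1 by simp
    also have "\<dots> = (X ** T) ** (Y ** T)" by (simp add: matrix_mul_assoc)
    also have "\<dots> = transpose (X ** T) ** transpose (Y ** T)" using x4 y4 by simp
    also have "\<dots> = transpose ((Y ** T) ** (X ** T))" by (simp add: matrix_transpose_mul)
    also have "(Y ** T) ** (X ** T) = Y ** (T ** X ** T)" by (simp add: matrix_mul_assoc)
    also have "\<dots> = Y ** T" using x1 by simp
    finally show ?thesis using y4 by simp
  qed
  have "X = X ** T ** X" using x2 by simp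
  also have "\<dots> = X ** (T ** X)" by (simp add: matrix_mul_assoc)
  also have "\<dots> = X ** (T ** Y)" using a by simp
  also have "\<dots> = (Y ** T) ** Y" using b by (simp add: matrix_mul_assoc)
  also have "\<dots> = Y" using y2 by simp
  finally show ?thesis .
qed

lemma pinv_exists:
  fixes T :: "real^'k^'d"
  assumes inj: "inj ((*v) T)"
  shows "\<exists>X. is_pinv T X \<and> X ** T = mat 1"
proof -
  define G where "G = transpose T ** T"
  have ker: "\<forall>x. G *v x = 0 \<longrightarrow> x = 0"
  proof (intro allI impI)
    fix x assume "G *v x = 0"
    hence "transpose T *v (T *v x) = 0" by (simp add: G_def matrix_vector_mul_assoc)
    hence "inner (transpose T *v (T *v x)) x = 0" by simp
    hence "inner (T *v x) (T *v x) = 0"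
      by (metis dot_lmul_matrix transpose_matrix_vector)
    hence "T *v x = 0" by simp
    hence "T *v x = T *v 0" by simp
    thus "x = 0" using inj by (meson injD)
  qed
  then obtain Gi where gi: "Gi ** G = mat 1" using matrix_left_invertible_ker by blast
  hence gi2: "G ** Gi = mat 1" using matrix_left_right_inverse by blast
  have Gsym: "transpose G = G" by (simp add: G_def matrix_transpose_mul)
  have "transpose Gi ** G = mat 1"
    using arg_cong[OF gi2, of transpose] Gsym by (simp add: matrix_transpose_mul)
  hence tGi: "transpose Gi = Gi"
    by (metis gi2 matrix_mul_assoc matrix_mul_lid matrix_mul_rid)
  define X where "X = Gi ** transpose T"
  have XT: "X ** T = mat 1" using gi by (simp add: X_def G_def matrix_mul_assoc)
  have "transpose (T ** X) = T ** X"
    by (simp add: X_def matrix_transpose_mul tGi matrix_mul_assoc)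
  moreover have "T ** X ** T = T" using XT by (metis matrix_mul_assoc matrix_mul_rid)
  moreover have "X ** T ** X = X" using XT by simp
  ultimately have "is_pinv T X" using XT by (simp add: is_pinv_def)
  thus ?thesis using XT by blast
qed

lemma pinv_left:
  fixes T :: "real^'k^'d"
  assumes inj: "inj ((*v) T)"
  shows "pinv T ** T = mat 1"
proof -
  obtain X where X: "is_pinv T X" "X ** T = mat 1" using pinv_exists[OF inj] by blast
  have "pinv T = X" unfolding pinv_def
    using pinv_unique X(1) by (intro the_equality) blast+
  thus ?thesis using X by simp
qed

lemma spec_norm_bound: "norm (A *v x) \<le> spec_norm A * norm x"
  unfolding spec_norm_def by (rule onorm) simp

theorem lemma3:
  fixes T That :: "real^'k^'d"
    and q p qh ph :: "real^'d"
    and \<theta> \<theta>h :: "real^'k"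
    and \<theta>max \<Delta>T \<Delta>p \<Delta>q :: real
  assumes full_rank: "rank T = CARD('k)"
    and eq: "T *v \<theta> = q - p"
    and theta_bound: "norm \<theta> \<le> \<theta>max"
    and "\<Delta>T \<ge> 0" and "\<Delta>p \<ge> 0" and "\<Delta>q \<ge> 0"
    and "spec_norm (That - T) \<le> \<Delta>T"
    and "norm (ph - p) \<le> \<Delta>p"
    and "norm (qh - q) \<le> \<Delta>q"
    and minimizer: "\<forall>\<theta>'. norm (That *v \<theta>h - qh + ph) + \<Delta>T * norm \<theta>h
                         \<le> norm (That *v \<theta>' - qh + ph) + \<Delta>T * norm \<theta>'"
  shows "norm (\<theta>h - \<theta>) \<le> 2 * spec_norm (pinv T) * (\<Delta>q + \<Delta>p + \<theta>max * \<Delta>T)"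
proof -
  note a = assms
  have inj: "inj ((*v) T)" using full_rank full_rank_injective by blast
  define D where "D = That - T"
  have dec: "That *v v - qh + ph = T *v (v - \<theta>) + (D *v v - (qh - q) + (ph - p))" for v
  proof -
    have 1: "That *v v = T *v v + D *v v" by (simp add: D_def matrix_vector_mult_diff_rdistrib)
    have 2: "T *v (v - \<theta>) = T *v v - (q - p)" using eq by (simp add: matrix_vector_mult_diff_distrib)
    show ?thesis unfolding 1 2 by (simp add: field_simps)
  qed
  have Dv: "norm (D *v v) \<le> \<Delta>T * norm v" for v
  proof -
    have "norm (D *v v) \<le> spec_norm D * norm v" by (rule spec_norm_bound)
    also have "\<dots> \<le> \<Delta>T * norm v" using a(7) by (simp add: D_def mult_right_mono)
    finally show ?thesis .
  qed
  have err: "norm (D *v v - (qh - q) + (ph - p)) \<le> \<Delta>T * norm v + \<Delta>q + \<Delta>p" for v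
    using Dv[of v] a(8,9) norm_triangle_ineq[of "D *v v - (qh - q)" "ph - p"]
      norm_triangle_ineq4[of "D *v v" "qh - q"] by linarith
  have lo: "norm (T *v (\<theta>h - \<theta>)) - (\<Delta>T * norm \<theta>h + \<Delta>q + \<Delta>p) \<le> norm (That *v \<theta>h - qh + ph)"
  proof -
    define u where "u = T *v (\<theta>h - \<theta>)"
    define w where "w = D *v \<theta>h - (qh - q) + (ph - p)"
    have "norm u - norm w \<le> norm (u + w)"
      by (rule norm_diff_ineq)
    thus ?thesis unfolding dec using err[of \<theta>h] by (simp add: u_def w_def)
  qed
  have hi: "norm (That *v \<theta> - qh + ph) \<le> \<Delta>T * norm \<theta> + \<Delta>q + \<Delta>p"
    unfolding dec using err[of \<theta>] by simp
  have "norm (T *v (\<theta>h - \<theta>)) \<le> 2 * (\<Delta>q + \<Delta>p + \<theta>max * \<Delta>T)"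
  proof -
    have "\<Delta>T * norm \<theta> \<le> \<Delta>T * \<theta>max" using theta_bound a(4) by (simp add: mult_left_mono)
    thus ?thesis using lo hi minimizer[rule_format, of \<theta>] by (simp add: algebra_simps)
  qed
  moreover have "\<theta>h - \<theta> = pinv T *v (T *v (\<theta>h - \<theta>))"
    by (simp add: matrix_vector_mul_assoc pinv_left[OF inj])
  hence "norm (\<theta>h - \<theta>) \<le> spec_norm (pinv T) * norm (T *v (\<theta>h - \<theta>))"
    by (metis spec_norm_bound)
  moreover have "spec_norm (pinv T) \<ge> 0" unfolding spec_norm_def by (rule onorm_pos_le) simp
  ultimately show ?thesis
  proof -
    assume h1: "norm (T *v (\<theta>h - \<theta>)) \<le> 2 * (\<Delta>q + \<Delta>p + \<theta>max * \<Delta>T)"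
      and h2: "norm (\<theta>h - \<theta>) \<le> spec_norm (pinv T) * norm (T *v (\<theta>h - \<theta>))"
      and h3: "0 \<le> spec_norm (pinv T)"
    have "spec_norm (pinv T) * norm (T *v (\<theta>h - \<theta>)) \<le> spec_norm (pinv T) * (2 * (\<Delta>q + \<Delta>p + \<theta>max * \<Delta>T))"
      using h1 h3 by (rule mult_left_mono)
    moreover have "spec_norm (pinv T) * (2 * (\<Delta>q + \<Delta>p + \<theta>max * \<Delta>T)) = 2 * spec_norm (pinv T) * (\<Delta>q + \<Delta>p + \<theta>max * \<Delta>T)"
      by (simp only: mult.assoc mult.left_commute)
    ultimately show ?thesis using h2 by linarith
  qed
qed

end
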